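(* Assume (H1'). Let $\phi$ be an admissible policy and $Y$ a $\mathbb W_2$-valued random variable on $\Omega^0$. If $$\lim_{n\to\infty}\mathbb P^0\Big[\bigcap_{k=0}^{\infty}\bigcup_{l=0}^{n}\mathscr A_l(Y)\cap\theta^k\mathscr A_{l+k}(Y)\Big]=1,$$ then $(U^{[Y]}_n)_{n\ge0}$ converges with strong backwards coupling to a stationary sequence $(U\circ\theta^n)_{n}$, where $U$ is a $\mathbb W_2$-valued solution of $U\circ\theta=(U\odot_\phi(V^0,\Sigma^0))\odot_\phi(V^1,\Sigma^1)$, $\mathbb P^0$-a.s.
   Context: $G=(\mathcal V,\mathcal E)$ finite connected simple graph; $\mathcal S$ the set of lists of preferences (for each class a linear ordering of its neighbours); $\phi$ a matching policy with probability $\nu_\phi$ on $\mathcal S$; $\mathbb W=\{w\in\mathcal V^*:|w|_i|w|_j=0 \text{ whenever } i,j \text{ adjacent}\}$, $\mathbb W_2$ its words of even length; admissible $\phi$: a map $\odot_\phi:\mathbb W\times(\mathcal V\times\mathcal S)\to\mathbb W$, $w\odot_\phi(v,\sigma)=wv$ if no letter of $w$ is adjacent to $v$, else $w$ with one letter adjacent to $v$ (chosen by $\phi$) deleted. (H1'): the sequence $(V_{2n},\Sigma_{2n},V_{2n+1},\Sigma_{2n+1})_{n\in\mathbb Z}$ (classes and preference lists of arriving items) is stationary ergodic, with $V_{2n}\sim\mu^0$, $V_{2n+1}\sim\mu^1$, $\Sigma_m\sim\nu_\phi$, and $\mu=(\mu^0+\mu^1)/2$ has full support. Work on the canonical space $\Omega^0=(\mathcal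 V\times\mathcal S\times\mathcal V\times\mathcal S)^{\mathbb Z}$ with the law $\mathbb P^0$ of this sequence and the shift $\theta((\omega_n)_n)=(\omega_{n+1})_n$; $(V^0,\Sigma^0,V^1,\Sigma^1)$ is the $0$-coordinate projection. For a $\mathbb W_2$-valued r.v. $Y$: $U^{[Y]}_0=Y$, $U^{[Y]}_{n+1}=(U^{[Y]}_n\odot_\phi(V^0\circ\theta^n,\Sigma^0\circ\theta^n))\odot_\phi(V^1\circ\theta^n,\Sigma^1\circ\theta^n)$. $\mathscr A_n(Y)=\{U^{[Y]}_n=\emptyset\}$. $(U^{[Y]}_n)$ converges with strong backwards coupling to $(U\circ\theta^n)$ if a.s. there is $N^*$ with $U^{[Y]}_n\circ\theta^{-n}=U$ for all $n\ge N^*$. *)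

theory Defs
  imports "HOL-Probability.Probability"
begin

definition simple_connected_graph :: "('v::finite \<Rightarrow> 'v \<Rightarrow> bool) \<Rightarrow> bool" where
  "simple_connected_graph E \<longleftrightarrow>
     (\<forall>u v. E u v \<longrightarrow> E v u) \<and> (\<forall>u. \<not> E u u) \<and> (\<forall>u v. E\<^sup>*\<^sup>* u v)"

text \<open>Lists of preferences: for each class v, a linear ordering (a duplicate-free list)
  of its neighbours.\<close>
definition prefs :: "('v \<Rightarrow> 'v \<Rightarrow> bool) \<Rightarrow> ('v \<Rightarrow> 'v list) set" where
  "prefs E = {\<sigma>. \<forall>v. distinct (\<sigma> v) \<and> set (\<sigma> v) = {u. E v u}}"

definition words :: "('v \<Rightarrow> 'v \<Rightarrow> bool) \<Rightarrow> 'v list set" where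
  "words E = {w. \<forall>i j. i \<in> set w \<longrightarrow> j \<in> set w \<longrightarrow> \<not> E i j}"

definition words2 :: "('v \<Rightarrow> 'v \<Rightarrow> bool) \<Rightarrow> 'v list set" where
  "words2 E = {w \<in> words E. even (length w)}"

text \<open>Admissible matching policy, given through its update map
  odot w v \<sigma> = w \<odot>_\<phi> (v,\<sigma>).\<close>
definition admissible ::
  "('v \<Rightarrow> 'v \<Rightarrow> bool) \<Rightarrow> ('v list \<Rightarrow> 'v \<Rightarrow> ('v \<Rightarrow> 'v list) \<Rightarrow> 'v list) \<Rightarrow> bool" where
  "admissible E odot \<longleftrightarrow>
     (\<forall>w \<in> words E. \<forall>v. \<forall>\<sigma> \<in> prefs E.
        (if (\<forall>x \<in> set w. \<not> E x v) then odot w v \<sigma> = w @ [v]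
         else (\<exists>i < length w. E (w ! i) v \<and> odot w v \<sigma> = take i w @ drop (Suc i) w)))"

type_synonym 'v arrival = "'v \<times> ('v \<Rightarrow> 'v list) \<times> 'v \<times> ('v \<Rightarrow> 'v list)"
type_synonym 'v omega = "int \<Rightarrow> 'v arrival"

definition arrivals :: "('v \<Rightarrow> 'v \<Rightarrow> bool) \<Rightarrow> 'v arrival set" where
  "arrivals E = UNIV \<times> prefs E \<times> UNIV \<times> prefs E"

definition canonical_space :: "('v \<Rightarrow> 'v \<Rightarrow> bool) \<Rightarrow> 'v omega measure" where
  "canonical_space E = Pi\<^sub>M UNIV (\<lambda>_. count_space (arrivals E))"

definition shift :: "'v omega \<Rightarrow> 'v omega" where
  "shift \<omega> = (\<lambda>n. \<omega> (n + 1))"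

definition shift_inv :: "'v omega \<Rightarrow> 'v omega" where
  "shift_inv \<omega> = (\<lambda>n. \<omega> (n - 1))"

definition V0 :: "'v omega \<Rightarrow> 'v" where "V0 \<omega> = fst (\<omega> 0)"
definition S0 :: "'v omega \<Rightarrow> ('v \<Rightarrow> 'v list)" where "S0 \<omega> = fst (snd (\<omega> 0))"
definition V1 :: "'v omega \<Rightarrow> 'v" where "V1 \<omega> = fst (snd (snd (\<omega> 0)))"
definition S1 :: "'v omega \<Rightarrow> ('v \<Rightarrow> 'v list)" where "S1 \<omega> = snd (snd (snd (\<omega> 0)))"

definition measure_preserving_map :: "'a measure \<Rightarrow> ('a \<Rightarrow> 'a) \<Rightarrow> bool" where
  "measure_preserving_map M T \<longleftrightarrow> T \<in> measurable M M \<and> distr M M T = M"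

definition ergodic_map :: "'a measure \<Rightarrow> ('a \<Rightarrow> 'a) \<Rightarrow> bool" where
  "ergodic_map M T \<longleftrightarrow>
     (\<forall>A \<in> sets M. T -` A \<inter> space M = A \<longrightarrow> measure M A = 0 \<or> measure M A = 1)"

primrec Useq ::
  "('v list \<Rightarrow> 'v \<Rightarrow> ('v \<Rightarrow> 'v list) \<Rightarrow> 'v list) \<Rightarrow> ('v omega \<Rightarrow> 'v list)
     \<Rightarrow> nat \<Rightarrow> 'v omega \<Rightarrow> 'v list" where
  "Useq odot Y 0 \<omega> = Y \<omega>"
| "Useq odot Y (Suc n) \<omega> =
     (let \<omega>' = (shift ^^ n) \<omega> in
       odot (odot (Useq odot Y n \<omega>) (V0 \<omega>') (S0 \<omega>')) (V1 \<omega>') (S1 \<omega>'))"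

definition Aev :: "'v omega measure \<Rightarrow> ('v list \<Rightarrow> 'v \<Rightarrow> ('v \<Rightarrow> 'v list) \<Rightarrow> 'v list)
     \<Rightarrow> ('v omega \<Rightarrow> 'v list) \<Rightarrow> nat \<Rightarrow> 'v omega set" where
  "Aev M odot Y n = {\<omega> \<in> space M. Useq odot Y n \<omega> = []}"

definition shift_set :: "'v omega measure \<Rightarrow> nat \<Rightarrow> 'v omega set \<Rightarrow> 'v omega set" where
  "shift_set M k A = {\<omega> \<in> space M. (shift_inv ^^ k) \<omega> \<in> A}"

end

theory Submission
  imports Defs
begin


lemma shift_pow: "(shift ^^ n) \<omega> = (\<lambda>i. \<omega> (i + int n))"
  by (induction n arbitrary: \<omega>) (auto simp: shift_def algebra_simps)

lemma shift_inv_pow: "(shift_inv ^^ n) \<omega> = (\<lambda>i. \<omega> (i - int n))"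
  by (induction n arbitrary: \<omega>) (auto simp: shift_inv_def algebra_simps)

lemma shift_shift_inv: "(shift ^^ n) ((shift_inv ^^ n) \<omega>) = \<omega>"
  "(shift_inv ^^ n) ((shift ^^ n) \<omega>) = \<omega>"
  by (simp_all add: shift_pow shift_inv_pow)

definition Fstep where
  "Fstep odot u \<omega> = odot (odot u (V0 \<omega>) (S0 \<omega>)) (V1 \<omega>) (S1 \<omega>)"

lemma Useq_Suc: "Useq odot Y (Suc n) \<omega> = Fstep odot (Useq odot Y n \<omega>) ((shift ^^ n) \<omega>)"
  by (simp add: Fstep_def Let_def)

lemma coupling:
  assumes "Useq odot Y l \<eta> = Useq odot Y (l + k) \<xi>" "(shift ^^ k) \<xi> = \<eta>" "l \<le> j"
  shows "Useq odot Y (j + k) \<xi> = Useq odot Y j \<eta>"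
  using assms(3)
proof (induction j rule: dec_induct)
  case base then show ?case using assms(1) by simp
next
  case (step j)
  have "(shift ^^ (j + k)) \<xi> = (shift ^^ j) \<eta>" using assms(2) by (simp add: funpow_add)
  then show ?case using step.IH by (simp add: Useq_Suc)
qed

definition Zs where "Zs odot Y m \<omega> = Useq odot Y m ((shift_inv ^^ m) \<omega>)"

lemma Z_step: "Zs odot Y (Suc m) (shift \<omega>) = Fstep odot (Zs odot Y m \<omega>) \<omega>"
proof -
  have "(shift_inv ^^ Suc m) (shift \<omega>) = (shift_inv ^^ m) \<omega>"
    by (simp add: shift_inv_pow shift_def shift_inv_def)
  then show ?thesis by (simp add: Zs_def Useq_Suc shift_shift_inv Fstep_def)
qed

lemma step_words:
  assumes g: "simple_connected_graph E" and p: "admissible E odot"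
    and w: "w \<in> words E" and s: "\<sigma> \<in> prefs E"
  shows "odot w v \<sigma> \<in> words E \<and> (even (length (odot w v \<sigma>)) \<longleftrightarrow> odd (length w))"
proof -
  have sym: "\<And>u v. E u v \<Longrightarrow> E v u" and irr: "\<And>u. \<not> E u u"
    using g by (auto simp: simple_connected_graph_def)
  have A: "(if (\<forall>x \<in> set w. \<not> E x v) then odot w v \<sigma> = w @ [v]
         else (\<exists>i < length w. E (w ! i) v \<and> odot w v \<sigma> = take i w @ drop (Suc i) w))"
    using p w s unfolding admissible_def by blast
  show ?thesis
  proof (cases "\<forall>x \<in> set w. \<not> E x v")
    case True
    then have "odot w v \<sigma> = w @ [v]" using A by simp
    then show ?thesis using True w irr sym unfolding words_def by auto
  next
    case False
    then have "\<exists>i < length w. E (w ! i) v \<and> odot w v \<sigma> = take i w @ drop (Suc i) w" using A by argo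
    then obtain i where i: "i < length w" "odot w v \<sigma> = take i w @ drop (Suc i) w" by blast
    have "set (take i w @ drop (Suc i) w) \<subseteq> set w"
      using set_take_subset set_drop_subset by fastforce
    then have "odot w v \<sigma> \<in> words E" using w i unfolding words_def by auto
    moreover have "length (odot w v \<sigma>) = length w - 1" using i by simp
    ultimately show ?thesis using i by (cases "length w") auto
  qed
qed

lemma main_aux:
  fixes E :: "'v::finite \<Rightarrow> 'v \<Rightarrow> bool"
    and odot :: "'v list \<Rightarrow> 'v \<Rightarrow> ('v \<Rightarrow> 'v list) \<Rightarrow> 'v list"
    and M :: "'v omega measure"
    and Y :: "'v omega \<Rightarrow> 'v list"
  assumes graph: "simple_connected_graph E"
    and policy: "admissible E odot"
    and prob: "prob_space M"
    and canon: "sets M = sets (canonical_space E)"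
    and stationary: "measure_preserving_map M shift"
    and Y_meas: "Y \<in> M \<rightarrow>\<^sub>M count_space UNIV"
    and Y_W2: "\<forall>\<omega> \<in> space M. Y \<omega> \<in> words2 E"
    and cond: "(\<lambda>n. measure M (\<Inter>k. \<Union>l\<in>{0..n}.
                  Aev M odot Y l \<inter> shift_set M k (Aev M odot Y (l + k)))) \<longlonglongrightarrow> 1"
  shows "\<exists>U. U \<in> M \<rightarrow>\<^sub>M count_space UNIV
           \<and> (\<forall>\<omega> \<in> space M. U \<omega> \<in> words2 E)
           \<and> (AE \<omega> in M. U (shift \<omega>) = odot (odot (U \<omega>) (V0 \<omega>) (S0 \<omega>)) (V1 \<omega>) (S1 \<omega>))
           \<and> (AE \<omega> in M. \<exists>N. \<forall>n\<ge>N. Useq odot Y n ((shift_inv ^^ n) \<omega>) = U \<omega>)"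
proof -
  interpret P: prob_space M by (rule prob)
  have sp: "space M = {\<omega>. \<forall>i. \<omega> i \<in> arrivals E}"
    using sets_eq_imp_space_eq[OF canon]
    by (auto simp: canonical_space_def space_PiM PiE_def Pi_def extensional_def)
  have comp: "(\<lambda>\<omega>. \<omega> i) \<in> M \<rightarrow>\<^sub>M count_space (arrivals E)" for i
    unfolding measurable_cong_sets[OF canon refl] canonical_space_def
    by (rule measurable_component_singleton) simp
  have shift_meas: "shift \<in> M \<rightarrow>\<^sub>M M" using stationary by (simp add: measure_preserving_map_def)
  have shift_inv_meas: "shift_inv \<in> M \<rightarrow>\<^sub>M M"
  proof -
    have "(\<lambda>\<omega> i. \<omega> (i - 1)) \<in> M \<rightarrow>\<^sub>M canonical_space E"
      unfolding canonical_space_def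
      by (rule measurable_PiM_single') (use comp sp in auto)
    then show ?thesis
      unfolding measurable_cong_sets[OF refl canon] by (simp add: shift_inv_def[abs_def])
  qed
  have pow_meas: "f \<in> M \<rightarrow>\<^sub>M M \<Longrightarrow> (f ^^ n) \<in> M \<rightarrow>\<^sub>M M" for f and n :: nat
    by (induction n) (auto intro: measurable_comp)
  have Useq_meas: "Useq odot Y n \<in> M \<rightarrow>\<^sub>M count_space UNIV" for n
  proof (induction n)
    case 0 then show ?case using Y_meas by (simp add: fun_eq_iff[symmetric] )
  next
    case (Suc n)
    define G where "G u a = odot (odot u (fst a) (fst (snd a))) (fst (snd (snd a))) (snd (snd (snd a)))" for u a
    have eq: "Useq odot Y (Suc n) = (\<lambda>\<omega>. G (Useq odot Y n \<omega>) (\<omega> (int n)))"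
      by (auto simp: G_def fun_eq_iff Let_def shift_pow V0_def S0_def V1_def S1_def)
    have "(\<lambda>\<omega>. G u (\<omega> (int n))) \<in> M \<rightarrow>\<^sub>M count_space UNIV" for u
      using measurable_comp[OF comp, of "G u" "count_space UNIV" "int n"] by (simp add: comp_def)
    then show ?case unfolding eq by (rule measurable_compose_countable[OF _ Suc])
  qed
  have Z_meas: "Zs odot Y n \<in> M \<rightarrow>\<^sub>M count_space UNIV" for n
    unfolding Zs_def[abs_def] using measurable_comp[OF pow_meas[OF shift_inv_meas] Useq_meas] 
    by (simp add: comp_def)
  have Useq_meas': "Useq odot Y n \<in> M \<rightarrow>\<^sub>M count_space UNIV" for n by (rule Useq_meas)
  have sinvk: "(shift_inv ^^ k) \<in> M \<rightarrow>\<^sub>M M" for k by (rule pow_meas[OF shift_inv_meas])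
  have shk: "(shift ^^ k) \<in> M \<rightarrow>\<^sub>M M" for k by (rule pow_meas[OF shift_meas])
  have W: "\<omega> \<in> space M \<Longrightarrow> Useq odot Y m \<omega> \<in> words2 E" for \<omega> m
  proof (induction m)
    case 0 then show ?case using Y_W2 by simp
  next
    case (Suc m)
    have "(shift ^^ m) \<omega> \<in> space M" using Suc.prems measurable_space[OF shk] by blast
    then have a: "(shift ^^ m) \<omega> 0 \<in> arrivals E" using sp by auto
    let ?w = "Useq odot Y m \<omega>" and ?o = "(shift ^^ m) \<omega>"
    have s0: "S0 ?o \<in> prefs E" and s1: "S1 ?o \<in> prefs E" using a
      by (auto simp: arrivals_def S0_def S1_def)
    have w: "?w \<in> words E" "even (length ?w)" using Suc by (auto simp: words2_def)
    note st1 = step_words[OF graph policy w(1) s0, of "V0 ?o"]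
    note st2 = step_words[OF graph policy st1[THEN conjunct1] s1, of "V1 ?o"]
    show ?case using st1 st2 w by (simp add: words2_def Let_def)
  qed
  define Pr where "Pr \<omega> \<longleftrightarrow> (\<exists>N. \<forall>m\<ge>N. Zs odot Y m \<omega> = Zs odot Y N \<omega>)" for \<omega>
  define L where "L \<omega> = (LEAST N. \<forall>m\<ge>N. Zs odot Y m \<omega> = Zs odot Y N \<omega>)" for \<omega>
  define U where "U \<omega> = (if Pr \<omega> then Zs odot Y (L \<omega>) \<omega> else [])" for \<omega>
  have UL: "Pr \<omega> \<Longrightarrow> \<forall>m\<ge>L \<omega>. Zs odot Y m \<omega> = U \<omega>" for \<omega>
  proof -
    assume p: "Pr \<omega>"
    have ex: "\<exists>N. \<forall>m\<ge>N. Zs odot Y m \<omega> = Zs odot Y N \<omega>" using p by (simp only: Pr_def)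
    have "\<forall>m\<ge>L \<omega>. Zs odot Y m \<omega> = Zs odot Y (L \<omega>) \<omega>"
      unfolding L_def by (rule LeastI_ex[OF ex])
    moreover have "U \<omega> = Zs odot Y (L \<omega>) \<omega>" using p by (simp add: U_def)
    ultimately show ?thesis by metis
  qed
  have PrI: "\<forall>m\<ge>N. Zs odot Y m \<omega> = c \<Longrightarrow> Pr \<omega>" for N c \<omega>
    unfolding Pr_def by (rule exI[of _ N]) auto
  have Zeq: "Measurable.pred M (\<lambda>\<omega>. Zs odot Y m \<omega> = Zs odot Y N \<omega>)" for m N
  proof -
    have "Measurable.pred M (\<lambda>\<omega>. Zs odot Y m \<omega> = c)" for c
      by (rule pred_count_space_const1[OF Z_meas])
    then show ?thesis by (rule measurable_compose_countable[OF _ Z_meas])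
  qed
  have Pr_meas: "Measurable.pred M (\<lambda>\<omega>. \<forall>m\<ge>N. Zs odot Y m \<omega> = Zs odot Y N \<omega>)" for N
  proof (rule pred_intros_countable(1))
    fix m show "Measurable.pred M (\<lambda>\<omega>. N \<le> m \<longrightarrow> Zs odot Y m \<omega> = Zs odot Y N \<omega>)"
      by (cases "N \<le> m") (simp_all add: Zeq)
  qed
  have L_meas: "L \<in> M \<rightarrow>\<^sub>M count_space UNIV"
    unfolding L_def[abs_def] by (rule measurable_Least) (rule Pr_meas)
  have U_meas: "U \<in> M \<rightarrow>\<^sub>M count_space UNIV"
  proof -
    have "(\<lambda>\<omega>. Zs odot Y (L \<omega>) \<omega>) \<in> M \<rightarrow>\<^sub>M count_space UNIV"
      by (rule measurable_compose_countable[OF Z_meas L_meas])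
    moreover have "Measurable.pred M Pr" unfolding Pr_def[abs_def]
      by (rule pred_intros_countable(2)) (rule Pr_meas)
    ultimately show ?thesis unfolding U_def[abs_def]
      by (intro measurable_If) (auto simp: pred_def)
  qed
  have U_W: "\<forall>\<omega> \<in> space M. U \<omega> \<in> words2 E"
  proof
    fix \<omega> assume "\<omega> \<in> space M"
    then have "(shift_inv ^^ L \<omega>) \<omega> \<in> space M" using measurable_space[OF sinvk] by blast
    then show "U \<omega> \<in> words2 E" using W by (auto simp: U_def Zs_def words2_def words_def)
  qed
  have rec: "Pr \<omega> \<Longrightarrow> U (shift \<omega>) = Fstep odot (U \<omega>) \<omega>" for \<omega>
  proof -
    assume p: "Pr \<omega>"
    have a: "\<forall>m\<ge>Suc (L \<omega>). Zs odot Y m (shift \<omega>) = Fstep odot (U \<omega>) \<omega>"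
    proof (intro allI impI)
      fix m assume "Suc (L \<omega>) \<le> m"
      then obtain m' where m': "m = Suc m'" "m' \<ge> L \<omega>" by (cases m) auto
      then show "Zs odot Y m (shift \<omega>) = Fstep odot (U \<omega>) \<omega>"
        using UL[OF p] by (simp add: Z_step)
    qed
    have p2: "Pr (shift \<omega>)" by (rule PrI[OF a])
    have "Zs odot Y (max (Suc (L \<omega>)) (L (shift \<omega>))) (shift \<omega>) = U (shift \<omega>)"
      using UL[OF p2] by simp
    then show ?thesis using a by simp
  qed
  define B where "B n = (\<Inter>k. \<Union>l\<in>{0..n}. Aev M odot Y l \<inter> shift_set M k (Aev M odot Y (l + k)))" for n
  define C where "C n = {\<omega> \<in> space M. (shift_inv ^^ n) \<omega> \<in> B n}" for n
  have B_eq: "B n = {\<omega> \<in> space M. \<forall>k. \<exists>l\<in>{0..n}. Useq odot Y l \<omega> = [] \<and>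
      (shift_inv ^^ k) \<omega> \<in> space M \<and> Useq odot Y (l + k) ((shift_inv ^^ k) \<omega>) = []}" for n
    by (auto simp: B_def Aev_def shift_set_def)
  have Aev_sets: "Aev M odot Y l \<in> sets M" for l
    using pred_count_space_const1[OF Useq_meas, of l "[]"] by (simp add: Aev_def pred_def)
  have ss_sets: "A \<in> sets M \<Longrightarrow> shift_set M k A \<in> sets M" for A k
  proof -
    assume A: "A \<in> sets M"
    have "shift_set M k A = (shift_inv ^^ k) -` A \<inter> space M" by (auto simp: shift_set_def)
    then show ?thesis using measurable_sets[OF sinvk A] by simp
  qed
  have B_sets: "B n \<in> sets M" for n
    unfolding B_def using Aev_sets ss_sets by (intro sets.countable_INT sets.finite_UN) auto
  have C_sets: "C n \<in> sets M" for n
  proof -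
    have "C n = (shift_inv ^^ n) -` B n \<inter> space M" by (auto simp: C_def)
    then show ?thesis using measurable_sets[OF sinvk B_sets] by simp
  qed
  have C_Pr: "\<omega> \<in> C n \<Longrightarrow> Pr \<omega>" for \<omega> n
  proof -
    assume c: "\<omega> \<in> C n"
    define \<eta> where "\<eta> = (shift_inv ^^ n) \<omega>"
    have hb: "\<eta> \<in> B n" using c by (simp add: C_def \<eta>_def)
    have "\<forall>m\<ge>n. Zs odot Y m \<omega> = Zs odot Y n \<omega>"
    proof (intro allI impI)
      fix m assume "n \<le> m"
      then obtain k where k: "m = n + k" using le_Suc_ex by blast
      have "\<exists>l\<in>{0..n}. Useq odot Y l \<eta> = [] \<and>
      (shift_inv ^^ k) \<eta> \<in> space M \<and> Useq odot Y (l + k) ((shift_inv ^^ k) \<eta>) = []"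
        using hb unfolding B_eq by blast
      then obtain l where l: "l \<le> n" "Useq odot Y l \<eta> = []"
        "Useq odot Y (l + k) ((shift_inv ^^ k) \<eta>) = []" by auto
      have "Useq odot Y (n + k) ((shift_inv ^^ k) \<eta>) = Useq odot Y n \<eta>"
        by (rule coupling) (use l shift_shift_inv in auto)
      moreover have "(shift_inv ^^ m) \<omega> = (shift_inv ^^ k) \<eta>"
        by (simp add: k \<eta>_def funpow_add add.commute)
      ultimately show "Zs odot Y m \<omega> = Zs odot Y n \<omega>"
        by (simp add: Zs_def k \<eta>_def)
    qed
    then show "Pr \<omega>" unfolding Pr_def by blast
  qed
  have mpow: "distr M M (shift ^^ n) = M" for n
  proof (induction n)
    case 0 then show ?case by (simp add: distr_id2 id_def)
  next
    case (Suc n)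
    have "distr M M (shift ^^ Suc n) = distr (distr M M (shift ^^ n)) M shift"
      using distr_distr[OF shift_meas shk[of n]] by simp
    also have "\<dots> = distr M M shift" using Suc by simp
    also have "\<dots> = M" using stationary by (simp add: measure_preserving_map_def)
    finally show ?case .
  qed
  have BC: "measure M (C n) = measure M (B n)" for n
  proof -
    have "B n = (shift ^^ n) -` C n \<inter> space M"
      using sets.sets_into_space[OF B_sets] measurable_space[OF shk]
      by (auto simp: C_def shift_shift_inv)
    then have "measure M (B n) = measure (distr M M (shift ^^ n)) (C n)"
      by (simp add: measure_distr[OF shk C_sets])
    then show ?thesis using mpow by simp
  qed
  define Nn where "Nn = (\<Inter>n. space M - C n)"
  have Nn_sets: "Nn \<in> sets M" unfolding Nn_def using C_sets by auto
  have "measure M Nn \<le> 1 - measure M (B n)" for n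
  proof -
    have "measure M Nn \<le> measure M (space M - C n)"
      by (rule P.finite_measure_mono) (auto simp: Nn_def intro: C_sets)
    also have "\<dots> = 1 - measure M (C n)" using P.prob_compl[OF C_sets] by simp
    finally show ?thesis using BC by simp
  qed
  moreover have "(\<lambda>n. 1 - measure M (B n)) \<longlonglongrightarrow> 0"
    using tendsto_diff[OF tendsto_const cond, of 1] by (simp add: B_def)
  ultimately have "measure M Nn \<le> 0"
    by (intro LIMSEQ_le_const[of "\<lambda>n. 1 - measure M (B n)"]) auto
  then have e0: "emeasure M Nn = 0"
    using P.emeasure_eq_measure by (simp add: measure_nonneg antisym)
  have AEPr: "AE \<omega> in M. Pr \<omega>"
  proof (rule AE_I[OF _ e0 Nn_sets])
    show "{x \<in> space M. \<not> Pr x} \<subseteq> Nn" using C_Pr by (auto simp: Nn_def)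
  qed
  show ?thesis
  proof (intro exI conjI)
    show "U \<in> M \<rightarrow>\<^sub>M count_space UNIV" by (rule U_meas)
    show "\<forall>\<omega> \<in> space M. U \<omega> \<in> words2 E" by (rule U_W)
    show "AE \<omega> in M. U (shift \<omega>) = odot (odot (U \<omega>) (V0 \<omega>) (S0 \<omega>)) (V1 \<omega>) (S1 \<omega>)"
      using AEPr by eventually_elim (simp add: rec Fstep_def)
    show "AE \<omega> in M. \<exists>N. \<forall>n\<ge>N. Useq odot Y n ((shift_inv ^^ n) \<omega>) = U \<omega>"
      using AEPr by eventually_elim (use UL in \<open>auto simp: Zs_def\<close>)
  qed
qed


theorem mainTheorem12:
  fixes E :: "'v::finite \<Rightarrow> 'v \<Rightarrow> bool"
    and odot :: "'v list \<Rightarrow> 'v \<Rightarrow> ('v \<Rightarrow> 'v list) \<Rightarrow> 'v list"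
    and \<nu> :: "('v \<Rightarrow> 'v list) pmf"
    and \<mu>0 \<mu>1 :: "'v pmf"
    and M :: "'v omega measure"
    and Y :: "'v omega \<Rightarrow> 'v list"
  assumes graph: "simple_connected_graph E"
    and policy: "admissible E odot"
    and nu_S: "set_pmf \<nu> \<subseteq> prefs E"
    and prob: "prob_space M"
    and canon: "sets M = sets (canonical_space E)"
    and stationary: "measure_preserving_map M shift"
    and ergodic: "ergodic_map M shift"
    and law_V0: "\<forall>n::int. distr M (count_space UNIV) (\<lambda>\<omega>. fst (\<omega> n)) = measure_pmf \<mu>0"
    and law_V1: "\<forall>n::int. distr M (count_space UNIV) (\<lambda>\<omega>. fst (snd (snd (\<omega> n)))) = measure_pmf \<mu>1"
    and law_S0: "\<forall>n::int. distr M (count_space UNIV) (\<lambda>\<omega>. fst (snd (\<omega> n))) = measure_pmf \<nu>"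
    and law_S1: "\<forall>n::int. distr M (count_space UNIV) (\<lambda>\<omega>. snd (snd (snd (\<omega> n)))) = measure_pmf \<nu>"
    and full_support: "\<forall>v. (pmf \<mu>0 v + pmf \<mu>1 v) / 2 > 0"
    and Y_meas: "Y \<in> M \<rightarrow>\<^sub>M count_space UNIV"
    and Y_W2: "\<forall>\<omega> \<in> space M. Y \<omega> \<in> words2 E"
    and cond: "(\<lambda>n. measure M (\<Inter>k. \<Union>l\<in>{0..n}.
                  Aev M odot Y l \<inter> shift_set M k (Aev M odot Y (l + k)))) \<longlonglongrightarrow> 1"
  shows "\<exists>U. U \<in> M \<rightarrow>\<^sub>M count_space UNIV
           \<and> (\<forall>\<omega> \<in> space M. U \<omega> \<in> words2 E)
           \<and> (AE \<omega> in M. U (shift \<omega>) = odot (odot (U \<omega>) (V0 \<omega>) (S0 \<omega>)) (V1 \<omega>) (S1 \<omega>))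
           \<and> (AE \<omega> in M. \<exists>N. \<forall>n\<ge>N. Useq odot Y n ((shift_inv ^^ n) \<omega>) = U \<omega>)"
    using main_aux[OF graph policy prob canon stationary Y_meas Y_W2 cond] .

end
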